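(* Let $\lambda>0$, $T\ge 1$, $X>0$, $Y>0$, and let $x_1,\dots,x_T\in\mathbb{R}^d$ with $\|x_t\|_2\le X$ and $y_1,\dots,y_T\in[-Y,Y]$ be arbitrary. Then for $\mathcal{A}\in\{\texttt{r},\texttt{f}\}$, $$R_T^{\mathcal{A}}\le c^{\mathcal{A}}\,(Y^{\mathcal{A}})^2\, d\log\Big(1+\frac{TX^2}{\lambda d}\Big)+\frac{\lambda\,(Y^{\mathcal{A}})^2\,T}{\lambda_{r_T}(G_T(0))},$$ where $c^{\texttt{r}}=4$, $c^{\texttt{f}}=1$, $Y^{\texttt{r}}=\max\{Y,\max_{1\le t\le T}|x_t^\top\theta^{\texttt{r}}_{t-1}|\}$, $Y^{\texttt{f}}=Y$, $r_T=\operatorname{rank}(G_T(0))$ and $\lambda_{r_T}(G_T(0))$ is the smallest positive eigenvalue of $G_T(0)$.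
   Context: Online regression with square loss: at each round $t$ the learner receives $x_t\in\mathbb{R}^d$, predicts $\hat y_t=x_t^\top\theta_{t-1}$, then observes $y_t$ and incurs $\ell_t=(\hat y_t-y_t)^2$. Write $\ell_t(\theta)=(x_t^\top\theta-y_t)^2$, $L_T(\theta)=\sum_{t=1}^T\ell_t(\theta)$, $L_T^{\mathcal{A}}=\sum_{t=1}^T(x_t^\top\theta^{\mathcal{A}}_{t-1}-y_t)^2$, and the regret $R_T^{\mathcal{A}}=L_T^{\mathcal{A}}-\min_{\theta\in\mathbb{R}^d}L_T(\theta)$. Let $G_t(\lambda)=\lambda I+\sum_{q=1}^t x_qx_q^\top$ and $b_t=\sum_{q=1}^t x_qy_q$. Online ridge regression ($\mathcal{A}=\texttt{r}$) uses $\theta^{\texttt{r}}_t=G_t(\lambda)^{-1}b_t$ (so $\theta_0^{\texttt r}=0$). The forward algorithm ($\mathcal{A}=\texttt{f}$) uses $\theta^{\texttt{f}}_{t-1}=G_t(\lambda)^{-1}b_{t-1}$, i.e. $\theta^{\texttt f}_{t-1}\in\arg\min_\theta L_{t-1}(\theta)+(x_t^\top\theta)^2+\lambda\|\theta\|_2^2$. *)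

theory Defs
  imports "HOL-Analysis.Analysis"
begin

definition outer :: "real^'d \<Rightarrow> real^'d^'d" where
  "outer x = (\<chi> i j. x$i * x$j)"

definition Gmat :: "(nat \<Rightarrow> real^'d) \<Rightarrow> real \<Rightarrow> nat \<Rightarrow> real^'d^'d" where
  "Gmat x lam t = lam *\<^sub>R mat 1 + (\<Sum>q=1..t. outer (x q))"

definition bvec :: "(nat \<Rightarrow> real^'d) \<Rightarrow> (nat \<Rightarrow> real) \<Rightarrow> nat \<Rightarrow> real^'d" where
  "bvec x y t = (\<Sum>q=1..t. y q *\<^sub>R x q)"

definition theta_r :: "(nat \<Rightarrow> real^'d) \<Rightarrow> (nat \<Rightarrow> real) \<Rightarrow> real \<Rightarrow> nat \<Rightarrow> real^'d" where
  "theta_r x y lam t = matrix_inv (Gmat x lam t) *v bvec x y t"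

text \<open>Forward algorithm: theta^f_{t-1} = G_t(lambda)^{-1} b_{t-1}; indexed by t (the round it is used in).\<close>
definition theta_f_round :: "(nat \<Rightarrow> real^'d) \<Rightarrow> (nat \<Rightarrow> real) \<Rightarrow> real \<Rightarrow> nat \<Rightarrow> real^'d" where
  "theta_f_round x y lam t = matrix_inv (Gmat x lam t) *v bvec x y (t - 1)"

definition Lfix :: "(nat \<Rightarrow> real^'d) \<Rightarrow> (nat \<Rightarrow> real) \<Rightarrow> nat \<Rightarrow> real^'d \<Rightarrow> real" where
  "Lfix x y T th = (\<Sum>t=1..T. (x t \<bullet> th - y t)^2)"

definition L_ridge :: "(nat \<Rightarrow> real^'d) \<Rightarrow> (nat \<Rightarrow> real) \<Rightarrow> real \<Rightarrow> nat \<Rightarrow> real" where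
  "L_ridge x y lam T = (\<Sum>t=1..T. (x t \<bullet> theta_r x y lam (t - 1) - y t)^2)"

definition L_forward :: "(nat \<Rightarrow> real^'d) \<Rightarrow> (nat \<Rightarrow> real) \<Rightarrow> real \<Rightarrow> nat \<Rightarrow> real" where
  "L_forward x y lam T = (\<Sum>t=1..T. (x t \<bullet> theta_f_round x y lam t - y t)^2)"

definition regret_ridge where
  "regret_ridge x y lam T = L_ridge x y lam T - (INF th. Lfix x y T th)"

definition regret_forward where
  "regret_forward x y lam T = L_forward x y lam T - (INF th. Lfix x y T th)"

definition is_eigenvalue :: "real^'d^'d \<Rightarrow> real \<Rightarrow> bool" where
  "is_eigenvalue A mu \<longleftrightarrow> (\<exists>v. v \<noteq> 0 \<and> A *v v = mu *\<^sub>R v)"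

text \<open>Smallest positive eigenvalue (lambda_{rank A}(A) for a PSD matrix A).
  Convention: 0 if there is no positive eigenvalue (i.e. A = 0 for PSD A).\<close>
definition min_pos_eig :: "real^'d^'d \<Rightarrow> real" where
  "min_pos_eig A = (if {mu. mu > 0 \<and> is_eigenvalue A mu} = {} then 0
                    else Min {mu. mu > 0 \<and> is_eigenvalue A mu})"

end

theory Submission
  imports Defs
begin

lemma det_rows_update_aux:
  fixes A :: "real^'n^'n" and u :: "real^'n" and a :: "real^'n"
  assumes "finite S" "k \<notin> S"
  shows "det (\<chi> i. if i = k then u else if i \<in> S then row i A + a$i *s u else row i A)
       = det (\<chi> i. if i = k then u else row i A)"
  using assms
proof (induction S rule: finite_induct)
  case empty
  show ?case by (rule arg_cong[where f=det]) (simp add: vec_eq_iff)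
next
  case (insert j S)
  let ?A' = "(\<chi> i. if i = k then u else if i \<in> S then row i A + a$i *s u else row i A) :: real^'n^'n"
  have jk: "j \<noteq> k" using insert by auto
  have "det (\<chi> m. if m = j then row j ?A' + a$j *s row k ?A' else row m ?A') = det ?A'"
    by (rule det_row_operation[OF jk])
  moreover have "(\<chi> m. if m = j then row j ?A' + a$j *s row k ?A' else row m ?A') =
     (\<chi> i. if i = k then u else if i \<in> insert j S then row i A + a$i *s u else row i A)"
    using insert jk by (auto simp: vec_eq_iff row_def)
  ultimately show ?case using insert by simp
qed

lemma det_rows_update:
  fixes A :: "real^'n^'n" and u :: "real^'n" and a :: "real^'n"
  assumes "finite S"
  shows "det (\<chi> i. if i \<in> S then row i A + a$i *s u else row i A)
       = det A + (\<Sum>k\<in>S. a$k * det (\<chi> i. if i = k then u else row i A))"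
  using assms
proof (induction S rule: finite_induct)
  case empty
  have "(\<chi> i. row i A) = A" by (vector row_def)
  then show ?case by simp
next
  case (insert k S)
  let ?c = "\<lambda>i. if i \<in> S then row i A + a$i *s u else row i A"
  have "(\<chi> i. if i \<in> insert k S then row i A + a$i *s u else row i A)
      = (\<chi> i. if i = k then row k A + a$k *s u else ?c i)"
    using insert by (auto simp: vec_eq_iff)
  also have "det \<dots> = det (\<chi> i. if i = k then row k A else ?c i) + det (\<chi> i. if i = k then a$k *s u else ?c i)"
    by (rule det_row_add)
  also have "(\<chi> i. if i = k then row k A else ?c i) = (\<chi> i. ?c i)"
    using insert by (auto simp: vec_eq_iff)
  also have "det (\<chi> i. if i = k then a$k *s u else ?c i) = a$k * det (\<chi> i. if i = k then u else ?c i)"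
    by (rule det_row_mul)
  also have "det (\<chi> i. if i = k then u else ?c i) = det (\<chi> i. if i = k then u else row i A)"
    using det_rows_update_aux[OF insert(1,2), where u=u and a=a and A=A] by simp
  finally show ?case using insert by (simp add: algebra_simps)
qed

lemma det_rank_one:
  fixes A :: "real^'n^'n" and u w :: "real^'n"
  assumes "transpose A *v w = u"
  shows "det (A + (\<chi> i j. a$i * u$j)) = det A * (1 + a \<bullet> w)"
proof -
  have eq: "A + (\<chi> i j. a$i * u$j) = (\<chi> i. if i \<in> UNIV then row i A + a$i *s u else row i A)"
    by (auto simp: vec_eq_iff row_def)
  have u: "u = (\<Sum>i\<in>UNIV. w$i *s row i A)"
    using assms[symmetric] by (simp add: matrix_vector_mult_def vec_eq_iff row_def transpose_def sum_component mult.commute)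
  have "det (\<chi> i. if i = k then u else row i A) = w$k * det A" for k
    using cramer_lemma_transpose[of k w A] by (subst u) simp
  then show ?thesis unfolding eq det_rows_update[OF finite]
    by (simp add: inner_vec_def sum_distrib_left sum_distrib_right algebra_simps sum.distrib)
qed

lemma quad_nonneg_lin_zero:
  fixes N \<beta> :: real
  assumes "N \<ge> 0" "\<And>t. 2 * t * N + t^2 * \<beta> \<ge> 0"
  shows "N = 0"
proof (rule ccontr)
  assume "N \<noteq> 0"
  then have N: "N > 0" using assms by simp
  define s where "s = N / (\<bar>\<beta>\<bar> + 1)"
  have s: "s > 0" using N by (simp add: s_def)
  have "2 * (-s) * N + (-s)^2 * \<beta> \<ge> 0" using assms(2) by blast
  then have "s * \<beta> \<ge> 2 * N" using s by (simp add: power2_eq_square algebra_simps)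
  moreover have "s * \<beta> \<le> s * \<bar>\<beta>\<bar>" using s by (simp add: mult_left_mono)
  moreover have "s * \<bar>\<beta>\<bar> < N" using N unfolding s_def
    by (simp add: divide_simps)
  ultimately show False using N by linarith
qed

lemma eigvec_exists_in_subspace:
  fixes f :: "real^'n \<Rightarrow> real^'n"
  assumes lin: "linear f" and sa: "\<And>u v. f u \<bullet> v = u \<bullet> f v"
    and S: "subspace S" "f ` S \<subseteq> S" "S \<noteq> {0}"
  shows "\<exists>v\<in>S. norm v = 1 \<and> f v = (v \<bullet> f v) *\<^sub>R v"
proof -
  let ?K = "sphere 0 1 \<inter> S"
  have cK: "compact ?K" using closed_subspace[OF S(1)] by (intro compact_Int_closed) auto
  obtain s where s: "s \<in> S" "s \<noteq> 0" using S(1,3) subspace_0 by blast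
  have "(1 / norm s) *\<^sub>R s \<in> ?K" using s S(1) by (simp add: subspace_scale)
  then have neK: "?K \<noteq> {}" by blast
  have bl: "bounded_linear f" using lin linear_conv_bounded_linear by blast
  have "continuous_on ?K (\<lambda>v. v \<bullet> f v)"
    by (intro continuous_intros linear_continuous_on bl)
  then obtain v0 where v0: "v0 \<in> ?K" and mn: "\<And>z. z \<in> ?K \<Longrightarrow> v0 \<bullet> f v0 \<le> z \<bullet> f z"
    using continuous_attains_inf[OF cK neK] by blast
  define m where "m = v0 \<bullet> f v0"
  define w where "w = f v0 - m *\<^sub>R v0"
  have v0S: "v0 \<in> S" and nv0: "norm v0 = 1" using v0 by auto
  have wS: "w \<in> S" unfolding w_def using S v0S by (auto intro: subspace_diff subspace_scale)
  have key: "z \<bullet> f z \<ge> m * (z \<bullet> z)" if zS: "z \<in> S" for z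
  proof (cases "z = 0")
    case True then show ?thesis using linear_0[OF lin] by simp
  next
    case False
    let ?u = "(1 / norm z) *\<^sub>R z"
    have "?u \<in> ?K" using False zS S(1) by (simp add: subspace_scale)
    then have "m \<le> ?u \<bullet> f ?u" using mn m_def by blast
    also have "?u \<bullet> f ?u = (z \<bullet> f z) / (norm z)^2"
      using linear_scale[OF lin] by (simp add: power2_eq_square)
    finally have "m * (norm z)^2 \<le> z \<bullet> f z" using False by (simp add: field_simps)
    then show ?thesis by (simp add: power2_norm_eq_inner)
  qed
  have "2 * t * (w \<bullet> w) + t^2 * (w \<bullet> f w - m * (w \<bullet> w)) \<ge> 0" for t
  proof -
    have "v0 + t *\<^sub>R w \<in> S" using v0S wS S(1) by (intro subspace_add subspace_scale) auto
    from key[OF this] have a: "(v0 + t *\<^sub>R w) \<bullet> f (v0 + t *\<^sub>R w) \<ge> m * ((v0 + t *\<^sub>R w) \<bullet> (v0 + t *\<^sub>R w))" .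
    have b: "(v0 + t *\<^sub>R w) \<bullet> f (v0 + t *\<^sub>R w) = m + 2 * t * (w \<bullet> f v0) + t^2 * (w \<bullet> f w)"
      using sa[of v0 w] linear_add[OF lin] linear_scale[OF lin] m_def
      by (simp add: inner_add inner_commute power2_eq_square algebra_simps)
    have c: "(v0 + t *\<^sub>R w) \<bullet> (v0 + t *\<^sub>R w) = 1 + 2 * t * (v0 \<bullet> w) + t^2 * (w \<bullet> w)"
    proof -
      have "v0 \<bullet> v0 = 1" using nv0 by (simp add: dot_square_norm)
      moreover have "(v0 + t *\<^sub>R w) \<bullet> (v0 + t *\<^sub>R w) = v0 \<bullet> v0 + 2 * t * (v0 \<bullet> w) + t^2 * (w \<bullet> w)"
        by (simp only: inner_add_left inner_add_right inner_scaleR_left inner_scaleR_right inner_commute[of w v0])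
           (simp add: power2_eq_square algebra_simps)
      ultimately show ?thesis by simp
    qed
    have d: "w \<bullet> f v0 = w \<bullet> w + m * (v0 \<bullet> w)"
      unfolding w_def by (simp add: inner_diff algebra_simps inner_commute)
    from a have "m + 2 * t * (w \<bullet> w + m * (v0 \<bullet> w)) + t^2 * (w \<bullet> f w) \<ge> m * (1 + 2 * t * (v0 \<bullet> w) + t^2 * (w \<bullet> w))"
      unfolding b c d .
    then show ?thesis by (simp add: algebra_simps)
  qed
  then have "w \<bullet> w = 0" by (intro quad_nonneg_lin_zero) auto
  then have "f v0 = m *\<^sub>R v0" unfolding w_def by simp
  then show ?thesis using v0S nv0 m_def by blast
qed

lemma spectral_subspace:
  fixes f :: "real^'n \<Rightarrow> real^'n"
  assumes lin: "linear f" and sa: "\<And>u v. f u \<bullet> v = u \<bullet> f v"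
  shows "subspace S \<Longrightarrow> f ` S \<subseteq> S \<Longrightarrow> dim S \<le> n \<Longrightarrow>
    \<exists>B \<subseteq> S. finite B \<and> pairwise orthogonal B \<and> (\<forall>b\<in>B. norm b = 1 \<and> f b = (b \<bullet> f b) *\<^sub>R b) \<and> span B = S"
proof (induction n arbitrary: S)
  case 0
  then have "S \<subseteq> {0}" by simp
  then have "S = {0}" using subspace_0[OF 0(1)] by auto
  then show ?case by (intro exI[of _ "{}"]) auto
next
  case (Suc n)
  show ?case
  proof (cases "S = {0}")
    case True
    then show ?thesis by (intro exI[of _ "{}"]) auto
  next
    case False
    obtain v0 where v0: "v0 \<in> S" "norm v0 = 1" "f v0 = (v0 \<bullet> f v0) *\<^sub>R v0"
      using eigvec_exists_in_subspace[OF lin sa Suc.prems(1,2) False] by blast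
    define m where "m = v0 \<bullet> f v0"
    define S' where "S' = {w \<in> S. v0 \<bullet> w = 0}"
    have sS': "subspace S'" using Suc.prems(1) unfolding S'_def subspace_def
      by (auto simp: inner_add inner_scaleR_right)
    have fS': "f ` S' \<subseteq> S'"
    proof
      fix z assume "z \<in> f ` S'"
      then obtain w where w: "w \<in> S'" "z = f w" by blast
      have "v0 \<bullet> f w = f v0 \<bullet> w" using sa by simp
      also have "\<dots> = 0" using v0(3) w(1) unfolding S'_def by (simp add: m_def[symmetric])
      finally show "z \<in> S'" using w Suc.prems(2) unfolding S'_def by auto
    qed
    have "S' \<subset> S"
    proof -
      have "v0 \<bullet> v0 \<noteq> 0" using v0(2) by (auto simp: inner_eq_zero_iff)
      then show ?thesis using v0(1) unfolding S'_def by blast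
    qed
    then have "span S' \<subset> span S" using sS' Suc.prems(1) by (metis span_eq_iff)
    then have "dim S' < dim S" by (rule dim_psubset)
    then have "dim S' \<le> n" using Suc.prems(3) by simp
    from Suc.IH[OF sS' fS' this] obtain B' where B': "B' \<subseteq> S'" "finite B'" "pairwise orthogonal B'"
      "\<forall>b\<in>B'. norm b = 1 \<and> f b = (b \<bullet> f b) *\<^sub>R b" "span B' = S'" by blast
    define B where "B = insert v0 B'"
    have "B \<subseteq> S" using B'(1) v0(1) unfolding B_def S'_def by auto
    moreover have "finite B" using B'(2) unfolding B_def by simp
    moreover have "pairwise orthogonal B"
      using B'(3) B'(1) unfolding B_def S'_def pairwise_def orthogonal_def
      by (auto simp: inner_commute)
    moreover have "\<forall>b\<in>B. norm b = 1 \<and> f b = (b \<bullet> f b) *\<^sub>R b" using B'(4) v0 unfolding B_def by auto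
    moreover have "span B = S"
    proof
      show "span B \<subseteq> S" using \<open>B \<subseteq> S\<close> Suc.prems(1) by (simp add: span_minimal)
      show "S \<subseteq> span B"
      proof
        fix z assume zS: "z \<in> S"
        have "z - (v0 \<bullet> z) *\<^sub>R v0 \<in> S'"
          using zS v0 Suc.prems(1) unfolding S'_def
          by (auto simp: inner_diff_right subspace_diff subspace_scale power2_norm_eq_inner[symmetric])
        then have "z - (v0 \<bullet> z) *\<^sub>R v0 \<in> span B" using B'(5) span_mono[of B' B] unfolding B_def by auto
        moreover have "(v0 \<bullet> z) *\<^sub>R v0 \<in> span B" unfolding B_def by (simp add: span_base span_scale)
        ultimately have "(z - (v0 \<bullet> z) *\<^sub>R v0) + (v0 \<bullet> z) *\<^sub>R v0 \<in> span B" by (rule span_add)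
        then show "z \<in> span B" by simp
      qed
    qed
    ultimately show ?thesis by blast
  qed
qed

lemma spectral:
  fixes f :: "real^'n \<Rightarrow> real^'n"
  assumes lin: "linear f" and sa: "\<And>u v. f u \<bullet> v = u \<bullet> f v"
  shows "\<exists>B. finite B \<and> pairwise orthogonal B \<and> (\<forall>b\<in>B. norm b = 1 \<and> f b = (b \<bullet> f b) *\<^sub>R b)
     \<and> card B = CARD('n) \<and> (\<forall>v. v = (\<Sum>b\<in>B. (v \<bullet> b) *\<^sub>R b))"
proof -
  obtain B where B: "finite B" "pairwise orthogonal B" "\<forall>b\<in>B. norm b = 1 \<and> f b = (b \<bullet> f b) *\<^sub>R b"
    "span B = UNIV"
    using spectral_subspace[OF lin sa, of UNIV "dim (UNIV :: (real^'n) set)"] by auto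
  have "0 \<notin> B" using B(3) by force
  then have ind: "independent B" using pairwise_orthogonal_independent B(2) by blast
  have "card B = dim (UNIV :: (real^'n) set)"
    using basis_card_eq_dim[of B UNIV] ind B(4) by auto
  then have cB: "card B = CARD('n)" by simp
  have exp: "v = (\<Sum>b\<in>B. (v \<bullet> b) *\<^sub>R b)" for v
  proof -
    let ?r = "v - (\<Sum>b\<in>B. (v \<bullet> b) *\<^sub>R b)"
    have "orthogonal ?r c" if "c \<in> B" for c
    proof -
      have "(\<Sum>b\<in>B. (v \<bullet> b) * (b \<bullet> c)) = (\<Sum>b\<in>B. if b = c then v \<bullet> c else 0)"
        using B(2,3) that unfolding pairwise_def orthogonal_def
        by (intro sum.cong) (auto simp: power2_norm_eq_inner[symmetric] dest: bspec)
      then show ?thesis using that B(1)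
        by (simp add: orthogonal_def inner_diff_left inner_sum_left)
    qed
    then have "orthogonal ?r ?r" using orthogonal_to_span[of ?r B ?r] B(4) by auto
    then show ?thesis by (simp add: orthogonal_def)
  qed
  show ?thesis using B cB exp by blast
qed

lemma sum_matrix_vector: "(\<Sum>i\<in>S. M i) *v (v::real^'n) = (\<Sum>i\<in>S. M i *v v)"
  for M :: "'a \<Rightarrow> real^'n^'m"
  by (induction S rule: infinite_finite_induct) (auto simp: matrix_vector_mult_add_rdistrib)

lemma outer_mult: "outer a *v v = (a \<bullet> v) *\<^sub>R a"
  by (simp add: outer_def matrix_vector_mult_def vec_eq_iff inner_vec_def sum_distrib_left mult.assoc mult.commute mult.left_commute)

lemma transpose_outer: "transpose (outer a) = outer a"
  by (simp add: outer_def transpose_def vec_eq_iff mult.commute)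

lemma transpose_add_m: "transpose (A + B) = transpose A + transpose (B::real^'n^'n)"
  by (simp add: transpose_def vec_eq_iff)

lemma transpose_sum_m: "transpose (\<Sum>i\<in>S. M i) = (\<Sum>i\<in>S. transpose (M i::real^'n^'n))"
  by (induction S rule: infinite_finite_induct) (auto simp: transpose_add_m transpose_def vec_eq_iff)

lemma sym_matrix_inner:
  fixes A :: "real^'n^'n"
  assumes "transpose A = A"
  shows "(A *v u) \<bullet> v = u \<bullet> (A *v v)"
proof -
  have "A *v u = u v* A" using vector_transpose_matrix[of u A] assms by simp
  then show ?thesis by (simp add: dot_lmul_matrix)
qed

lemma trace_outer_sum: "trace (\<Sum>b\<in>B. c b *\<^sub>R outer b) = (\<Sum>b\<in>B. c b * (b \<bullet> b))"
  for B :: "(real^'n) set"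
  by (simp add: trace_def outer_def sum_component inner_vec_def sum_distrib_left power2_eq_square)
     (rule sum.swap)

lemma matrix_spectral:
  fixes A :: "real^'n^'n"
  assumes sym: "transpose A = A"
  shows "\<exists>B. finite B \<and> pairwise orthogonal B \<and> (\<forall>b\<in>B. norm b = 1 \<and> A *v b = (b \<bullet> (A *v b)) *\<^sub>R b)
     \<and> card B = CARD('n) \<and> (\<forall>v. v = (\<Sum>b\<in>B. (v \<bullet> b) *\<^sub>R b))
     \<and> A = (\<Sum>b\<in>B. (b \<bullet> (A *v b)) *\<^sub>R outer b)
     \<and> det A = (\<Prod>b\<in>B. b \<bullet> (A *v b)) \<and> trace A = (\<Sum>b\<in>B. b \<bullet> (A *v b))"
proof -
  have lin: "linear ((*v) A)" by (rule matrix_vector_mul_linear)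
  obtain B where B: "finite B" "pairwise orthogonal B" "\<forall>b\<in>B. norm b = 1 \<and> A *v b = (b \<bullet> (A *v b)) *\<^sub>R b"
    "card B = CARD('n)" "\<forall>v. v = (\<Sum>b\<in>B. (v \<bullet> b) *\<^sub>R b)"
    using spectral[OF lin sym_matrix_inner[OF sym]] by blast
  define \<mu> where "\<mu> b = b \<bullet> (A *v b)" for b
  have orth: "b \<bullet> c = (if b = c then 1 else 0)" if "b \<in> B" "c \<in> B" for b c
    using B(2,3) that unfolding pairwise_def orthogonal_def
    by (auto simp: power2_norm_eq_inner[symmetric] dest: bspec)
  have Aexp: "A = (\<Sum>b\<in>B. \<mu> b *\<^sub>R outer b)"
  proof (subst matrix_eq, intro allI)
    fix v
    have "A *v v = A *v (\<Sum>b\<in>B. (v \<bullet> b) *\<^sub>R b)" using B(5) by metis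
    also have "\<dots> = (\<Sum>b\<in>B. (v \<bullet> b) *\<^sub>R (A *v b))"
      by (simp add: linear_sum[OF lin] linear_scale[OF lin] o_def)
    also have "\<dots> = (\<Sum>b\<in>B. (\<mu> b *\<^sub>R outer b) *v v)"
    proof (intro sum.cong refl)
      fix b assume "b \<in> B"
      then have "A *v b = \<mu> b *\<^sub>R b" using B(3) \<mu>_def by auto
      then show "(v \<bullet> b) *\<^sub>R (A *v b) = (\<mu> b *\<^sub>R outer b) *v v"
        by (simp add: outer_mult scaleR_matrix_vector_assoc[symmetric] inner_commute)
    qed
    finally show "A *v v = (\<Sum>b\<in>B. \<mu> b *\<^sub>R outer b) *v v" by (simp add: sum_matrix_vector)
  qed
  have tr: "trace A = (\<Sum>b\<in>B. \<mu> b)"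
    using B(3) by (subst Aexp) (simp add: trace_outer_sum dot_square_norm)
  define M where "M S = (\<Sum>b\<in>S. \<mu> b *\<^sub>R outer b) + (\<Sum>b\<in>B - S. outer b)" for S
  have detM: "det (M S) = (\<Prod>b\<in>S. \<mu> b)" if "S \<subseteq> B" for S
  proof -
    have "finite S" using B(1) that finite_subset by blast
    then show ?thesis using that
    proof (induction S rule: finite_subset_induct')
      case empty
      have "M {} = mat 1"
      proof (subst matrix_eq, intro allI)
        fix v
        have "M {} *v v = (\<Sum>b\<in>B. (v \<bullet> b) *\<^sub>R b)"
          by (simp add: M_def sum_matrix_vector outer_mult inner_commute)
        then show "M {} *v v = mat 1 *v v" using B(5) by simp
      qed
      then show ?case by simp
    next
      case (insert c S)
      have cB: "c \<in> B" and cS: "c \<notin> S" and SB: "S \<subseteq> B" using insert by auto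
      have BS: "B - S = insert c (B - insert c S)" using cB cS by auto
      have Mi: "M (insert c S) = M S + (\<chi> i j. ((\<mu> c - 1) *\<^sub>R c)$i * c$j)"
      proof -
        have "M S = (\<Sum>b\<in>S. \<mu> b *\<^sub>R outer b) + outer c + (\<Sum>b\<in>B - insert c S. outer b)"
          unfolding M_def BS using B(1) by (subst sum.insert) auto
        moreover have "M (insert c S) = (\<Sum>b\<in>S. \<mu> b *\<^sub>R outer b) + \<mu> c *\<^sub>R outer c + (\<Sum>b\<in>B - insert c S. outer b)"
          unfolding M_def using insert(1) cS by (simp add: algebra_simps)
        moreover have "(\<chi> i j. ((\<mu> c - 1) *\<^sub>R c)$i * c$j) = \<mu> c *\<^sub>R outer c - outer c"
          by (simp add: outer_def vec_eq_iff algebra_simps)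
        ultimately show ?thesis by (simp add: algebra_simps)
      qed
      have symM: "transpose (M S) = M S"
        unfolding M_def by (simp add: transpose_add_m transpose_sum_m transpose_scalar transpose_outer)
      have Mc: "M S *v c = c"
      proof -
        have "M S *v c = (\<Sum>b\<in>S. (\<mu> b * (b \<bullet> c)) *\<^sub>R b) + (\<Sum>b\<in>B - S. (b \<bullet> c) *\<^sub>R b)"
          by (simp add: M_def sum_matrix_vector matrix_vector_mult_add_rdistrib outer_mult scaleR_matrix_vector_assoc[symmetric])
        also have "(\<Sum>b\<in>S. (\<mu> b * (b \<bullet> c)) *\<^sub>R b) = 0"
          using SB cS cB by (intro sum.neutral) (auto simp: orth)
        also have "(\<Sum>b\<in>B - S. (b \<bullet> c) *\<^sub>R b) = (\<Sum>b\<in>B - S. if b = c then c else 0)"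
          using cB by (intro sum.cong) (auto simp: orth)
        also have "\<dots> = c" using cB cS B(1) by (simp add: sum.delta)
        finally show ?thesis by simp
      qed
      have "det (M (insert c S)) = det (M S) * (1 + ((\<mu> c - 1) *\<^sub>R c) \<bullet> c)"
        unfolding Mi by (rule det_rank_one) (simp add: symM Mc)
      also have "((\<mu> c - 1) *\<^sub>R c) \<bullet> c = \<mu> c - 1" using orth[OF cB cB] by simp
      finally show ?case using insert by (simp add: mult.commute)
    qed
  qed
  have "M B = A" unfolding M_def Aexp by simp
  then have "det A = (\<Prod>b\<in>B. \<mu> b)" using detM[of B] by simp
  then show ?thesis using B tr Aexp unfolding \<mu>_def by blast
qed

lemma Gmat_mult: "Gmat x lam t *v v = lam *\<^sub>R v + (\<Sum>q=1..t. (x q \<bullet> v) *\<^sub>R x q)"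
  by (simp add: Gmat_def matrix_vector_mult_add_rdistrib scaleR_matrix_vector_assoc[symmetric]
      sum_matrix_vector outer_mult)

lemma Gmat_sym: "transpose (Gmat x lam t) = Gmat x lam t"
  by (simp add: Gmat_def transpose_add_m transpose_scalar transpose_sum_m transpose_outer)

lemma Gmat_inner_sym: "(Gmat x lam t *v u) \<bullet> v = u \<bullet> (Gmat x lam t *v v)"
  by (rule sym_matrix_inner[OF Gmat_sym])

lemma Gmat_quad: "v \<bullet> (Gmat x lam t *v v) = lam * (v \<bullet> v) + (\<Sum>q=1..t. (x q \<bullet> v)^2)"
  by (simp add: Gmat_mult inner_add_right inner_sum_right power2_eq_square inner_commute)

lemma Gmat_psd: "lam \<ge> 0 \<Longrightarrow> v \<bullet> (Gmat x lam t *v v) \<ge> 0"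
  unfolding Gmat_quad by (intro add_nonneg_nonneg sum_nonneg) auto

lemma Gmat_Suc: "Gmat x lam (Suc t) = Gmat x lam t + outer (x (Suc t))"
  by (simp add: Gmat_def algebra_simps)

lemma bvec_Suc: "bvec x y (Suc t) = bvec x y t + y (Suc t) *\<^sub>R x (Suc t)"
  by (simp add: bvec_def)

lemma bvec_0: "bvec x y 0 = 0"
  by (simp add: bvec_def)

lemma Gmat_0: "Gmat x lam 0 = lam *\<^sub>R mat 1"
  by (simp add: Gmat_def)

lemma Gmat_invertible:
  assumes "lam > 0" shows "invertible (Gmat x lam t)"
proof -
  have "v = 0" if "Gmat x lam t *v v = 0" for v
  proof -
    have "0 = v \<bullet> (Gmat x lam t *v v)" using that by simp
    also have "\<dots> \<ge> lam * (v \<bullet> v)" unfolding Gmat_quad by (simp add: sum_nonneg)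
    finally have "v \<bullet> v \<le> 0" using assms by (simp add: mult_le_0_iff)
    then show ?thesis by (metis inner_eq_zero_iff inner_ge_zero order_antisym)
  qed
  then show ?thesis unfolding invertible_left_inverse matrix_left_invertible_ker by blast
qed

lemma inv_right_mult:
  assumes "invertible A" shows "A *v (matrix_inv A *v w) = (w::real^'n)"
proof -
  have "A ** matrix_inv A = mat 1"
    using assms unfolding invertible_def matrix_inv_def by (rule someI2_ex) auto
  then show ?thesis by (simp add: matrix_vector_mul_assoc)
qed

lemma quad_identity:
  fixes A :: "real^'n^'n"
  assumes "transpose A = A" "A *v u = c"
  shows "th \<bullet> (A *v th) - 2 * (th \<bullet> c) = u \<bullet> (A *v u) - 2 * (u \<bullet> c) + (th - u) \<bullet> (A *v (th - u))"
proof -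
  have s: "u \<bullet> (A *v th) = c \<bullet> th" using sym_matrix_inner[OF assms(1), of u th] assms(2) by simp
  show ?thesis using s assms(2)
    by (simp add: matrix_vector_mult_diff_distrib inner_diff_left inner_diff_right inner_commute algebra_simps)
qed

lemma complete_square:
  fixes A :: "real^'n^'n"
  assumes "transpose A = A" "\<And>v. v \<bullet> (A *v v) \<ge> 0" "A *v z = xv"
  shows "d \<bullet> (A *v d) + 2 * c * (xv \<bullet> d) \<ge> - (c^2 * (xv \<bullet> z))"
proof -
  have s: "z \<bullet> (A *v d) = xv \<bullet> d" using sym_matrix_inner[OF assms(1), of z d] assms(3) by simp
  have "0 \<le> (d + c *\<^sub>R z) \<bullet> (A *v (d + c *\<^sub>R z))" by (rule assms(2))
  also have "\<dots> = d \<bullet> (A *v d) + 2 * c * (xv \<bullet> d) + c^2 * (xv \<bullet> z)"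
    using s assms(3) sym_matrix_inner[OF assms(1), of d z]
    by (simp add: matrix_vector_right_distrib inner_add_left inner_add_right
        scaleR_matrix_vector_assoc[symmetric] matrix_vector_mult_scaleR power2_eq_square inner_commute algebra_simps)
  finally show ?thesis by simp
qed

lemma telescope:
  fixes a m c :: "nat \<Rightarrow> real"
  assumes "\<And>n. a (Suc n) \<le> m (Suc n) - m n + c (Suc n)"
  shows "(\<Sum>t=1..T. a t) \<le> m T - m 0 + (\<Sum>t=1..T. c t)"
proof (induction T)
  case 0 then show ?case by simp
next
  case (Suc T)
  then show ?case using assms[of T] by simp
qed

lemma amgm_ln:
  fixes \<mu> :: "'a \<Rightarrow> real"
  assumes "finite B" "card B > 0" "\<And>b. b \<in> B \<Longrightarrow> \<mu> b > 0"
  shows "(\<Sum>b\<in>B. ln (\<mu> b)) \<le> real (card B) * ln ((\<Sum>b\<in>B. \<mu> b) / real (card B))"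
proof -
  define m where "m = (\<Sum>b\<in>B. \<mu> b) / real (card B)"
  have "B \<noteq> {}" using assms(2) by auto
  then have "(\<Sum>b\<in>B. \<mu> b) > 0" using assms(1,3) by (intro sum_pos) auto
  then have m: "m > 0" and sne: "(\<Sum>b\<in>B. \<mu> b) \<noteq> 0" using assms(2) by (auto simp add: m_def)
  have "ln (\<mu> b) \<le> ln m + (\<mu> b / m - 1)" if "b \<in> B" for b
  proof -
    have "ln (\<mu> b / m) \<le> \<mu> b / m - 1" using assms(3)[OF that] m by (intro ln_le_minus_one) simp
    then show ?thesis using assms(3)[OF that] m by (simp add: ln_div)
  qed
  then have "(\<Sum>b\<in>B. ln (\<mu> b)) \<le> (\<Sum>b\<in>B. ln m + (\<mu> b / m - 1))" by (rule sum_mono)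
  also have "\<dots> = real (card B) * ln m + ((\<Sum>b\<in>B. \<mu> b) / m - real (card B))"
    by (simp add: sum.distrib sum_subtractf sum_divide_distrib[symmetric])
  also have "(\<Sum>b\<in>B. \<mu> b) / m = real (card B)" using sne assms(2) by (simp add: m_def)
  finally show ?thesis by (simp add: m_def)
qed

lemma trace_Gmat: "trace (Gmat x lam t) = lam * real CARD('d) + (\<Sum>q=1..t. x q \<bullet> x q)"
  for x :: "nat \<Rightarrow> real^'d"
proof -
  have "trace (lam *\<^sub>R (mat 1 :: real^'d^'d)) = lam * real CARD('d)"
    by (simp add: trace_def mat_def)
  moreover have "trace (\<Sum>q=1..t. outer (x q)) = (\<Sum>q=1..t. x q \<bullet> x q)"
    using trace_outer_sum[of "\<lambda>_. 1" "x ` {1..t}"]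
    by (simp add: trace_def outer_def sum_component inner_vec_def power2_eq_square) (rule sum.swap)
  ultimately show ?thesis by (simp add: Gmat_def trace_add)
qed

lemma det_Gmat_0: "det (Gmat x lam 0) = lam ^ CARD('d)"
  for x :: "nat \<Rightarrow> real^'d"
  by (simp add: Gmat_0 det_diagonal mat_def)

definition Pq :: "(nat \<Rightarrow> real^'d) \<Rightarrow> (nat \<Rightarrow> real) \<Rightarrow> real \<Rightarrow> nat \<Rightarrow> real^'d \<Rightarrow> real" where
  "Pq x y lam t th = th \<bullet> (Gmat x lam t *v th) - 2 * (th \<bullet> bvec x y t) + (\<Sum>q=1..t. (y q)^2)"

definition hq :: "(nat \<Rightarrow> real^'d) \<Rightarrow> real \<Rightarrow> nat \<Rightarrow> real" where
  "hq x lam t = x t \<bullet> (matrix_inv (Gmat x lam t) *v x t)"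

lemma Pq_Lfix: "Pq x y lam t th = Lfix x y t th + lam * (th \<bullet> th)"
proof -
  have "(\<Sum>q=1..t. (x q \<bullet> th - y q)^2) = (\<Sum>q=1..t. (x q \<bullet> th)^2) - 2 * (\<Sum>q=1..t. y q * (x q \<bullet> th)) + (\<Sum>q=1..t. (y q)^2)"
    by (simp add: power2_diff sum.distrib sum_subtractf sum_distrib_left algebra_simps)
  moreover have "th \<bullet> bvec x y t = (\<Sum>q=1..t. y q * (x q \<bullet> th))"
    by (simp add: bvec_def inner_sum_right inner_commute)
  ultimately show ?thesis
    by (simp add: Pq_def Lfix_def Gmat_quad inner_commute)
qed

lemma Pq_Suc: "Pq x y lam (Suc n) th = Pq x y lam n th + (x (Suc n) \<bullet> th - y (Suc n))^2"
  by (simp add: Pq_Lfix Lfix_def)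

lemma Lfix_nonneg: "Lfix x y t th \<ge> 0"
  by (simp add: Lfix_def sum_nonneg)

lemma Gmat_Suc_quad: "d \<bullet> (Gmat x lam (Suc n) *v d) = d \<bullet> (Gmat x lam n *v d) + (x (Suc n) \<bullet> d)^2"
  by (simp add: Gmat_Suc matrix_vector_mult_add_rdistrib outer_mult inner_add_right power2_eq_square inner_commute)

lemma ln_diff_aux: "(a::real) > 0 \<Longrightarrow> b > 0 \<Longrightarrow> ln a - ln b = ln (a / b)"
  by (simp add: ln_div)

context
  fixes x :: "nat \<Rightarrow> real^'d" and y :: "nat \<Rightarrow> real" and lam :: real
  assumes lam: "lam > 0"
begin

lemma Gr: "Gmat x lam t *v theta_r x y lam t = bvec x y t"
  unfolding theta_r_def by (rule inv_right_mult[OF Gmat_invertible[OF lam]])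

lemma Pq_min_eq: "Pq x y lam t th = Pq x y lam t (theta_r x y lam t)
   + (th - theta_r x y lam t) \<bullet> (Gmat x lam t *v (th - theta_r x y lam t))"
  using quad_identity[OF Gmat_sym Gr, of th] unfolding Pq_def by simp

lemma Pq_min: "Pq x y lam t th \<ge> Pq x y lam t (theta_r x y lam t)"
  using Pq_min_eq[of t th] Gmat_psd[of lam "th - theta_r x y lam t" x t] lam by simp

lemma hq_nonneg: "hq x lam t \<ge> 0"
proof -
  let ?z = "matrix_inv (Gmat x lam t) *v x t"
  have "x t = Gmat x lam t *v ?z" by (simp add: inv_right_mult[OF Gmat_invertible[OF lam]])
  then have "hq x lam t = (Gmat x lam t *v ?z) \<bullet> ?z" unfolding hq_def by (metis inner_commute)
  also have "\<dots> = ?z \<bullet> (Gmat x lam t *v ?z)" by (simp add: inner_commute)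
  finally show ?thesis using Gmat_psd[of lam ?z x t] lam by simp
qed

lemma ridge_step:
  fixes n :: nat
  defines "e \<equiv> x (Suc n) \<bullet> theta_r x y lam n - y (Suc n)"
  shows "e^2 \<le> Pq x y lam (Suc n) (theta_r x y lam (Suc n)) - Pq x y lam n (theta_r x y lam n) + e^2 * hq x lam (Suc n)"
proof -
  let ?t = "Suc n"
  let ?th = "theta_r x y lam ?t" and ?u = "theta_r x y lam n"
  let ?d = "?th - ?u"
  let ?z = "matrix_inv (Gmat x lam ?t) *v x ?t"
  have 1: "Pq x y lam ?t ?th = Pq x y lam n ?th + (x ?t \<bullet> ?th - y ?t)^2" by (rule Pq_Suc)
  have 2: "Pq x y lam n ?th = Pq x y lam n ?u + ?d \<bullet> (Gmat x lam n *v ?d)" by (rule Pq_min_eq)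
  have 3: "x ?t \<bullet> ?th - y ?t = x ?t \<bullet> ?d + e" unfolding e_def by (simp add: inner_diff_right)
  have 4: "?d \<bullet> (Gmat x lam ?t *v ?d) = ?d \<bullet> (Gmat x lam n *v ?d) + (x ?t \<bullet> ?d)^2" by (rule Gmat_Suc_quad)
  have 5: "?d \<bullet> (Gmat x lam ?t *v ?d) + 2 * e * (x ?t \<bullet> ?d) \<ge> - (e^2 * (x ?t \<bullet> ?z))"
    by (rule complete_square[OF Gmat_sym]) (auto intro!: Gmat_psd less_imp_le[OF lam] simp: inv_right_mult[OF Gmat_invertible[OF lam]])
  have 6: "x ?t \<bullet> ?z = hq x lam ?t" by (simp add: hq_def)
  have 3: "(x ?t \<bullet> ?th - y ?t)^2 = (x ?t \<bullet> ?d)^2 + 2 * e * (x ?t \<bullet> ?d) + e^2"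
    unfolding 3 by (simp add: power2_sum)
  have 5: "?d \<bullet> (Gmat x lam ?t *v ?d) + 2 * e * (x ?t \<bullet> ?d) \<ge> - (e^2 * hq x lam ?t)"
    using 5 6 by simp
  show ?thesis using 1 2 3 4 5 by linarith
qed

lemma Gf: "Gmat x lam (Suc n) *v theta_f_round x y lam (Suc n) = bvec x y n"
  unfolding theta_f_round_def using inv_right_mult[OF Gmat_invertible[OF lam]] by simp

lemma forward_step:
  fixes n :: nat
  defines "yh \<equiv> x (Suc n) \<bullet> theta_f_round x y lam (Suc n)"
  shows "(yh - y (Suc n))^2 \<le> Pq x y lam (Suc n) (theta_r x y lam (Suc n)) - Pq x y lam n (theta_r x y lam n)
           + (y (Suc n))^2 * hq x lam (Suc n)"
proof -
  let ?t = "Suc n"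
  let ?th = "theta_r x y lam ?t" and ?u = "theta_f_round x y lam ?t"
  let ?d = "?th - ?u"
  let ?z = "matrix_inv (Gmat x lam ?t) *v x ?t"
  let ?S = "\<Sum>q=1..n. (y q)^2"
  have 1: "Pq x y lam ?t ?th = Pq x y lam n ?th + (x ?t \<bullet> ?th - y ?t)^2" by (rule Pq_Suc)
  have 2: "Pq x y lam n ?th + (x ?t \<bullet> ?th)^2 = ?th \<bullet> (Gmat x lam ?t *v ?th) - 2 * (?th \<bullet> bvec x y n) + ?S"
    unfolding Pq_def Gmat_Suc_quad by simp
  have 3: "?th \<bullet> (Gmat x lam ?t *v ?th) - 2 * (?th \<bullet> bvec x y n)
      = ?u \<bullet> (Gmat x lam ?t *v ?u) - 2 * (?u \<bullet> bvec x y n) + ?d \<bullet> (Gmat x lam ?t *v ?d)"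
    by (rule quad_identity[OF Gmat_sym Gf])
  have 4: "?u \<bullet> (Gmat x lam ?t *v ?u) = ?u \<bullet> (Gmat x lam n *v ?u) + yh^2"
    unfolding yh_def Gmat_Suc_quad by (simp add: inner_commute)
  have 5: "Pq x y lam n ?u = ?u \<bullet> (Gmat x lam n *v ?u) - 2 * (?u \<bullet> bvec x y n) + ?S"
    by (simp add: Pq_def)
  have 6: "Pq x y lam n ?u \<ge> Pq x y lam n (theta_r x y lam n)" by (rule Pq_min)
  have 7: "x ?t \<bullet> ?th = yh + x ?t \<bullet> ?d" unfolding yh_def by (simp add: inner_diff_right)
  have 8: "?d \<bullet> (Gmat x lam ?t *v ?d) + 2 * (- y ?t) * (x ?t \<bullet> ?d) \<ge> - ((- y ?t)^2 * (x ?t \<bullet> ?z))"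
    by (rule complete_square[OF Gmat_sym]) (auto intro!: Gmat_psd less_imp_le[OF lam] simp: inv_right_mult[OF Gmat_invertible[OF lam]])
  have 9: "x ?t \<bullet> ?z = hq x lam ?t" by (simp add: hq_def)
  have 10: "(x ?t \<bullet> ?th - y ?t)^2 = (x ?t \<bullet> ?th)^2 - 2 * y ?t * (x ?t \<bullet> ?th) + (y ?t)^2"
    by (simp add: power2_diff)
  have 8: "?d \<bullet> (Gmat x lam ?t *v ?d) - 2 * y ?t * (x ?t \<bullet> ?d) \<ge> - ((y ?t)^2 * hq x lam ?t)"
    using 8 9 by simp
  have 7: "2 * y ?t * (x ?t \<bullet> ?th) = 2 * y ?t * yh + 2 * y ?t * (x ?t \<bullet> ?d)"
    using 7 by (simp add: algebra_simps)
  have 11: "(yh - y ?t)^2 = yh^2 - 2 * y ?t * yh + (y ?t)^2" by (simp add: power2_diff)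
  show ?thesis using 1 2 3 4 5 6 7 8 10 11 by linarith
qed

lemma det_Gmat_pos: "det (Gmat x lam t) > 0"
proof -
  obtain B where B: "finite B" "\<forall>b\<in>B. norm b = 1"
      "det (Gmat x lam t) = (\<Prod>b\<in>B. b \<bullet> (Gmat x lam t *v b))"
    using matrix_spectral[OF Gmat_sym[of x lam t]] by blast
  have "b \<bullet> (Gmat x lam t *v b) > 0" if "b \<in> B" for b
  proof -
    have "b \<bullet> b = 1" using B(2) that by (simp add: dot_square_norm)
    then have "b \<bullet> (Gmat x lam t *v b) \<ge> lam" unfolding Gmat_quad by (simp add: sum_nonneg)
    then show ?thesis using lam by simp
  qed
  then show ?thesis using B(3) by (simp add: prod_pos)
qed

lemma hq_log: "hq x lam (Suc n) \<le> ln (det (Gmat x lam (Suc n))) - ln (det (Gmat x lam n))"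
proof -
  let ?t = "Suc n"
  let ?z = "matrix_inv (Gmat x lam ?t) *v x ?t"
  have "Gmat x lam n = Gmat x lam ?t + (\<chi> i j. (- x ?t)$i * (x ?t)$j)"
    by (simp add: Gmat_Suc outer_def vec_eq_iff)
  then have "det (Gmat x lam n) = det (Gmat x lam ?t) * (1 + (- x ?t) \<bullet> ?z)"
    using det_rank_one[of "Gmat x lam ?t" ?z "x ?t" "- x ?t"]
    by (simp add: Gmat_sym inv_right_mult[OF Gmat_invertible[OF lam]])
  then have eq: "det (Gmat x lam n) = det (Gmat x lam ?t) * (1 - hq x lam ?t)" by (simp add: hq_def)
  have p1: "det (Gmat x lam n) > 0" and p2: "det (Gmat x lam ?t) > 0" by (rule det_Gmat_pos)+
  then have hpos: "1 - hq x lam ?t > 0" using eq by (metis zero_less_mult_pos)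
  have "ln (det (Gmat x lam n)) = ln (det (Gmat x lam ?t)) + ln (1 - hq x lam ?t)"
    using eq p2 hpos by (simp add: ln_mult)
  moreover have "ln (1 - hq x lam ?t) \<le> (1 - hq x lam ?t) - 1" using hpos by (rule ln_le_minus_one)
  ultimately show ?thesis by simp
qed

lemma sum_hq:
  assumes "\<And>t. t \<in> {1..T} \<Longrightarrow> norm (x t) \<le> X"
  shows "(\<Sum>t=1..T. hq x lam t) \<le> real CARD('d) * ln (1 + real T * X^2 / (lam * real CARD('d)))"
proof -
  let ?d = "real CARD('d)"
  have dpos: "?d > 0" by simp
  have "(\<Sum>t=1..T. hq x lam t) \<le> ln (det (Gmat x lam T)) - ln (det (Gmat x lam 0)) + (\<Sum>t=1..T. 0)"
    by (rule telescope) (simp add: hq_log)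
  also have "ln (det (Gmat x lam 0)) = ?d * ln lam" using lam by (simp add: det_Gmat_0 ln_realpow)
  finally have s1: "(\<Sum>t=1..T. hq x lam t) \<le> ln (det (Gmat x lam T)) - ?d * ln lam" by simp
  obtain B where B: "finite B" "\<forall>b\<in>B. norm b = 1" "card B = CARD('d)"
      "det (Gmat x lam T) = (\<Prod>b\<in>B. b \<bullet> (Gmat x lam T *v b))"
      "trace (Gmat x lam T) = (\<Sum>b\<in>B. b \<bullet> (Gmat x lam T *v b))"
    using matrix_spectral[OF Gmat_sym[of x lam T]] by blast
  have mpos: "b \<bullet> (Gmat x lam T *v b) > 0" if "b \<in> B" for b
  proof -
    have "b \<bullet> b = 1" using B(2) that by (simp add: dot_square_norm)
    then have "b \<bullet> (Gmat x lam T *v b) \<ge> lam" unfolding Gmat_quad by (simp add: sum_nonneg)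
    then show ?thesis using lam by simp
  qed
  have "ln (det (Gmat x lam T)) = (\<Sum>b\<in>B. ln (b \<bullet> (Gmat x lam T *v b)))"
    unfolding B(4) by (rule ln_prod[OF B(1)]) (use mpos in force)
  also have "\<dots> \<le> ?d * ln (trace (Gmat x lam T) / ?d)"
    using amgm_ln[of B "\<lambda>b. b \<bullet> (Gmat x lam T *v b)"] B(1,3,5) mpos by simp
  finally have s2: "ln (det (Gmat x lam T)) \<le> ?d * ln (trace (Gmat x lam T) / ?d)" .
  have "trace (Gmat x lam T) \<le> lam * ?d + real T * X^2"
  proof -
    have "(\<Sum>q=1..T. x q \<bullet> x q) \<le> (\<Sum>q=1..T. X^2)"
    proof (intro sum_mono)
      fix q assume "q \<in> {1..T}"
      then have "norm (x q) \<le> X" by (rule assms)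
      then have "(norm (x q))^2 \<le> X^2" by (intro power_mono) auto
      then show "x q \<bullet> x q \<le> X^2" by (simp add: dot_square_norm)
    qed
    then show ?thesis by (simp add: trace_Gmat)
  qed
  moreover have "trace (Gmat x lam T) > 0"
  proof -
    have "B \<noteq> {}" using B(3) by (metis card.empty zero_less_card_finite less_irrefl)
    then show ?thesis unfolding B(5) using B(1) mpos by (intro sum_pos) auto
  qed
  ultimately have "ln (trace (Gmat x lam T) / ?d) \<le> ln ((lam * ?d + real T * X^2) / ?d)"
    using dpos by (simp add: divide_right_mono)
  then have "?d * ln (trace (Gmat x lam T) / ?d) \<le> ?d * ln ((lam * ?d + real T * X^2) / ?d)"
    using dpos by (intro mult_left_mono) auto
  then have "ln (det (Gmat x lam T)) - ?d * ln lam \<le> ?d * (ln ((lam * ?d + real T * X^2) / ?d) - ln lam)"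
    using s2 unfolding right_diff_distrib by linarith
  also have "ln ((lam * ?d + real T * X^2) / ?d) - ln lam = ln (1 + real T * X^2 / (lam * ?d))"
  proof -
    have pos: "(lam * ?d + real T * X^2) / ?d > 0" using lam dpos by (simp add: add_pos_nonneg)
    have "ln ((lam * ?d + real T * X^2) / ?d) - ln lam = ln ((lam * ?d + real T * X^2) / ?d / lam)"
      using pos lam by (rule ln_diff_aux)
    also have "(lam * ?d + real T * X^2) / ?d / lam = 1 + real T * X^2 / (lam * ?d)"
      using lam dpos by (simp add: field_simps)
    finally show ?thesis .
  qed
  finally show ?thesis using s1 by simp
qed

end

lemma lsq_exists:
  fixes x :: "nat \<Rightarrow> real^'d" and y :: "nat \<Rightarrow> real"
  shows "\<exists>ths. (\<forall>th. Lfix x y T ths \<le> Lfix x y T th) \<and>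
     ths \<bullet> ths \<le> (\<Sum>q=1..T. (y q)^2) / min_pos_eig (Gmat x 0 T) \<and> min_pos_eig (Gmat x 0 T) \<ge> 0"
proof -
  let ?G = "Gmat x 0 T" and ?bT = "bvec x y T" and ?S = "\<Sum>q=1..T. (y q)^2"
  obtain B where B: "finite B" "pairwise orthogonal B" "\<forall>b\<in>B. norm b = 1 \<and> ?G *v b = (b \<bullet> (?G *v b)) *\<^sub>R b"
    "\<forall>v. v = (\<Sum>b\<in>B. (v \<bullet> b) *\<^sub>R b)"
    using matrix_spectral[OF Gmat_sym[of x 0 T]] by blast
  define \<nu> where "\<nu> b = b \<bullet> (?G *v b)" for b
  have Gb: "?G *v b = \<nu> b *\<^sub>R b" if "b \<in> B" for b using B(3) that \<nu>_def by auto
  have nu_nn: "\<nu> b \<ge> 0" for b unfolding \<nu>_def by (rule Gmat_psd) simp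
  have orth: "b \<bullet> c = (if b = c then 1 else 0)" if "b \<in> B" "c \<in> B" for b c
    using B(2,3) that unfolding pairwise_def orthogonal_def
    by (auto simp: power2_norm_eq_inner[symmetric] dest: bspec)
  have bT0: "?bT \<bullet> b = 0" if "\<nu> b = 0" for b
  proof -
    have "(\<Sum>q=1..T. (x q \<bullet> b)^2) = 0" using that unfolding \<nu>_def Gmat_quad by simp
    then have "\<forall>q\<in>{1..T}. (x q \<bullet> b)^2 = 0" by (subst (asm) sum_nonneg_eq_0_iff) auto
    then show ?thesis by (simp add: bvec_def inner_sum_left)
  qed
  define coef where "coef b = (if \<nu> b = 0 then 0 else (?bT \<bullet> b) / \<nu> b)" for b
  define ths where "ths = (\<Sum>b\<in>B. coef b *\<^sub>R b)"
  have lin: "linear ((*v) ?G)" by (rule matrix_vector_mul_linear)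
  have Gths: "?G *v ths = ?bT"
  proof -
    have "?G *v ths = (\<Sum>b\<in>B. coef b *\<^sub>R (?G *v b))"
      unfolding ths_def by (simp add: linear_sum[OF lin] linear_scale[OF lin] o_def)
    also have "\<dots> = (\<Sum>b\<in>B. (?bT \<bullet> b) *\<^sub>R b)"
      by (intro sum.cong refl) (auto simp: Gb coef_def bT0)
    also have "\<dots> = ?bT" using B(4) by metis
    finally show ?thesis .
  qed
  have Lq: "Lfix x y T th = Pq x y 0 T th" for th by (simp add: Pq_Lfix)
  have min: "Lfix x y T ths \<le> Lfix x y T th" for th
  proof -
    have "Pq x y 0 T th = Pq x y 0 T ths + (th - ths) \<bullet> (?G *v (th - ths))"
      using quad_identity[OF Gmat_sym Gths, of th] unfolding Pq_def by simp
    moreover have "(th - ths) \<bullet> (?G *v (th - ths)) \<ge> 0" by (rule Gmat_psd) simp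
    ultimately show ?thesis unfolding Lq by simp
  qed
  have thth: "ths \<bullet> ths = (\<Sum>b\<in>B. (coef b)^2)"
  proof -
    have "ths \<bullet> ths = (\<Sum>b\<in>B. \<Sum>c\<in>B. coef b * coef c * (c \<bullet> b))"
      unfolding ths_def by (simp add: inner_sum_left inner_sum_right sum_distrib_left mult.assoc)
    also have "\<dots> = (\<Sum>b\<in>B. \<Sum>c\<in>B. if b = c then coef b * coef c else 0)"
      by (intro sum.cong refl) (auto simp: orth)
    also have "\<dots> = (\<Sum>b\<in>B. (coef b)^2)" using B(1) by (simp add: power2_eq_square)
    finally show ?thesis .
  qed
  have thb: "ths \<bullet> ?bT = (\<Sum>b\<in>B. coef b * (b \<bullet> ?bT))"
    unfolding ths_def by (simp add: inner_sum_left)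
  have thbS: "ths \<bullet> ?bT \<le> ?S"
  proof -
    have "Pq x y 0 T ths = ths \<bullet> ?bT - 2 * (ths \<bullet> ?bT) + ?S" unfolding Pq_def Gths by simp
    moreover have "Pq x y 0 T ths \<ge> 0" using Lfix_nonneg Lq by metis
    ultimately show ?thesis by simp
  qed
  define E where "E = {mu. mu > 0 \<and> is_eigenvalue ?G mu}"
  have Esub: "E \<subseteq> \<nu> ` B"
  proof
    fix mu assume "mu \<in> E"
    then obtain v where v: "v \<noteq> 0" "?G *v v = mu *\<^sub>R v" unfolding E_def is_eigenvalue_def by auto
    have "\<exists>b\<in>B. v \<bullet> b \<noteq> 0"
    proof (rule ccontr)
      assume "\<not> ?thesis"
      then have "v = 0" using B(4) by (metis (no_types, lifting) scale_zero_left sum.neutral)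
      then show False using v by simp
    qed
    then obtain b where b: "b \<in> B" "v \<bullet> b \<noteq> 0" by blast
    have "\<nu> b * (b \<bullet> v) = (?G *v b) \<bullet> v" using Gb[OF b(1)] by simp
    also have "\<dots> = b \<bullet> (?G *v v)" by (rule Gmat_inner_sym)
    also have "\<dots> = mu * (b \<bullet> v)" using v by simp
    finally have "\<nu> b = mu" using b(2) by (simp add: inner_commute)
    then show "mu \<in> \<nu> ` B" using b by blast
  qed
  have finE: "finite E" using Esub B(1) finite_subset by blast
  have mpe_def': "min_pos_eig ?G = (if E = {} then 0 else Min E)" unfolding min_pos_eig_def E_def by simp
  have mpe_nn: "min_pos_eig ?G \<ge> 0"
  proof (cases "E = {}")
    case False
    then have "Min E \<in> E" using finE by (rule Min_in[rotated])
    then show ?thesis using False mpe_def' unfolding E_def by auto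
  qed (simp add: mpe_def')
  have "ths \<bullet> ths \<le> ?S / min_pos_eig ?G"
  proof (cases "\<exists>b\<in>B. \<nu> b \<noteq> 0")
    case False
    then have "ths \<bullet> ths = 0" unfolding thth coef_def by simp
    moreover have "?S \<ge> 0" by (simp add: sum_nonneg)
    ultimately show ?thesis using mpe_nn by simp
  next
    case True
    then obtain b0 where b0: "b0 \<in> B" "\<nu> b0 \<noteq> 0" by blast
    have nuE: "\<nu> b \<in> E" if "b \<in> B" "\<nu> b \<noteq> 0" for b
    proof -
      have "b \<noteq> 0" using B(3) that(1) by auto
      then show ?thesis unfolding E_def is_eigenvalue_def using Gb[OF that(1)] nu_nn[of b] that(2) by auto
    qed
    have Ene: "E \<noteq> {}" using nuE[OF b0] by blast
    have mpe: "min_pos_eig ?G = Min E" using Ene mpe_def' by simp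
    have mpos: "Min E > 0" using Min_in[OF finE Ene] unfolding E_def by auto
    have mle: "Min E \<le> \<nu> b" if "b \<in> B" "\<nu> b \<noteq> 0" for b using Min_le[OF finE nuE[OF that]] .
    have "(coef b)^2 \<le> coef b * (b \<bullet> ?bT) / Min E" if "b \<in> B" for b
    proof (cases "\<nu> b = 0")
      case True then show ?thesis by (simp add: coef_def)
    next
      case False
      have nupos: "\<nu> b > 0" using False nu_nn[of b] by simp
      have "(coef b)^2 = (?bT \<bullet> b)^2 / (\<nu> b * \<nu> b)" using False by (simp add: coef_def power2_eq_square)
      also have "\<dots> \<le> (?bT \<bullet> b)^2 / (\<nu> b * Min E)"
        using mle[OF that False] mpos nupos
        by (intro divide_left_mono mult_left_mono mult_pos_pos) auto
      also have "\<dots> = coef b * (b \<bullet> ?bT) / Min E" using False by (simp add: coef_def power2_eq_square inner_commute)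
      finally show ?thesis .
    qed
    then have "ths \<bullet> ths \<le> (\<Sum>b\<in>B. coef b * (b \<bullet> ?bT) / Min E)" unfolding thth by (rule sum_mono)
    also have "\<dots> = (ths \<bullet> ?bT) / Min E" unfolding thb by (simp add: sum_divide_distrib)
    also have "\<dots> \<le> ?S / Min E" using thbS mpos by (simp add: divide_right_mono)
    finally show ?thesis using mpe by simp
  qed
  then show ?thesis using min mpe_nn by blast
qed

theorem corollary1:
  fixes x :: "nat \<Rightarrow> real^'d" and y :: "nat \<Rightarrow> real"
    and lam X Y :: real and T :: nat
  assumes "lam > 0" and "T \<ge> 1" and "X > 0" and "Y > 0"
    and "\<And>t. t \<in> {1..T} \<Longrightarrow> norm (x t) \<le> X"
    and "\<And>t. t \<in> {1..T} \<Longrightarrow> \<bar>y t\<bar> \<le> Y"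
  shows "(regret_ridge x y lam T \<le>
           (let Yr = max Y (Max {\<bar>x t \<bullet> theta_r x y lam (t - 1)\<bar> | t. t \<in> {1..T}}) in
            4 * Yr^2 * real CARD('d) * ln (1 + real T * X^2 / (lam * real CARD('d)))
            + lam * Yr^2 * real T / min_pos_eig (Gmat x 0 T))) \<and>
         regret_forward x y lam T \<le>
            1 * Y^2 * real CARD('d) * ln (1 + real T * X^2 / (lam * real CARD('d)))
            + lam * Y^2 * real T / min_pos_eig (Gmat x 0 T)"
proof -
  note lam = assms(1)
  let ?d = "real CARD('d)"
  let ?ln = "ln (1 + real T * X^2 / (lam * ?d))"
  let ?mpe = "min_pos_eig (Gmat x 0 T)"
  let ?H = "\<Sum>t=1..T. hq x lam t"
  let ?m = "\<lambda>n. Pq x y lam n (theta_r x y lam n)"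
  obtain ths where ths: "\<And>th. Lfix x y T ths \<le> Lfix x y T th"
    "ths \<bullet> ths \<le> (\<Sum>q=1..T. (y q)^2) / ?mpe" "?mpe \<ge> 0"
    using lsq_exists[of x y T] by blast
  have Sle: "(\<Sum>q=1..T. (y q)^2) \<le> real T * Y^2"
  proof -
    have "(\<Sum>q=1..T. (y q)^2) \<le> (\<Sum>q=1..T. Y^2)"
    proof (intro sum_mono)
      fix q assume "q \<in> {1..T}"
      then have "\<bar>y q\<bar> \<le> Y" by (rule assms(6))
      then show "(y q)^2 \<le> Y^2" by (metis abs_ge_zero power2_abs power_mono)
    qed
    then show ?thesis by simp
  qed
  have reg_term: "lam * (ths \<bullet> ths) \<le> lam * Y^2 * real T / ?mpe"
  proof -
    have "ths \<bullet> ths \<le> real T * Y^2 / ?mpe"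
      using ths(2) Sle ths(3) by (meson divide_right_mono order_trans)
    then have "lam * (ths \<bullet> ths) \<le> lam * (real T * Y^2 / ?mpe)" using lam by (intro mult_left_mono) auto
    also have "\<dots> = lam * Y^2 * real T / ?mpe" by simp
    finally show ?thesis .
  qed
  have INF: "Lfix x y T ths \<le> (INF th. Lfix x y T th)"
    by (rule cINF_greatest) (auto simp: ths(1))
  have m0: "?m 0 = 0" by (simp add: Pq_def theta_r_def bvec_0)
  have mT: "?m T \<le> Lfix x y T ths + lam * (ths \<bullet> ths)"
    using Pq_min[OF lam, where x=x and y=y and t=T and th=ths] by (simp add: Pq_Lfix)
  have H: "?H \<le> ?d * ?ln" by (rule sum_hq[OF lam]) (rule assms(5))
  have lnnn: "?ln \<ge> 0" using lam by (simp add: add_nonneg_nonneg)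
  have Hnn: "\<And>t. hq x lam t \<ge> 0" using hq_nonneg[OF lam] by blast
  define Yr where "Yr = max Y (Max {\<bar>x t \<bullet> theta_r x y lam (t - 1)\<bar> | t. t \<in> {1..T}})"
  have YYr: "Y \<le> Yr" unfolding Yr_def by simp
  have e_bd: "(x t \<bullet> theta_r x y lam (t - 1) - y t)^2 \<le> 4 * Yr^2" if "t \<in> {1..T}" for t
  proof -
    have fin: "finite {\<bar>x t \<bullet> theta_r x y lam (t - 1)\<bar> | t. t \<in> {1..T}}"
      by (simp add: setcompr_eq_image)
    have "\<bar>x t \<bullet> theta_r x y lam (t - 1)\<bar> \<le> Max {\<bar>x t \<bullet> theta_r x y lam (t - 1)\<bar> | t. t \<in> {1..T}}"
      using that by (intro Max_ge[OF fin]) blast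
    then have a: "\<bar>x t \<bullet> theta_r x y lam (t - 1)\<bar> \<le> Yr" unfolding Yr_def by simp
    have b: "\<bar>y t\<bar> \<le> Yr" using assms(6)[OF that] YYr by simp
    have "\<bar>x t \<bullet> theta_r x y lam (t - 1) - y t\<bar> \<le> 2 * Yr" using a b by linarith
    then have "\<bar>x t \<bullet> theta_r x y lam (t - 1) - y t\<bar>^2 \<le> (2 * Yr)^2" by (intro power_mono) auto
    then show ?thesis by (simp add: power2_eq_square)
  qed
  have "L_ridge x y lam T \<le> ?m T - ?m 0 + (\<Sum>t=1..T. (x t \<bullet> theta_r x y lam (t - 1) - y t)^2 * hq x lam t)"
    unfolding L_ridge_def by (rule telescope) (use ridge_step[OF lam] in simp)
  also have "(\<Sum>t=1..T. (x t \<bullet> theta_r x y lam (t - 1) - y t)^2 * hq x lam t) \<le> (\<Sum>t=1..T. 4 * Yr^2 * hq x lam t)"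
    using e_bd Hnn by (intro sum_mono mult_right_mono) auto
  also have "\<dots> = 4 * Yr^2 * ?H" by (simp add: sum_distrib_left)
  also have "\<dots> \<le> 4 * Yr^2 * (?d * ?ln)" using H by (intro mult_left_mono) auto
  finally have R1: "L_ridge x y lam T \<le> Lfix x y T ths + lam * (ths \<bullet> ths) + 4 * Yr^2 * (?d * ?ln)"
    using mT m0 by linarith
  have "lam * Y^2 * real T / ?mpe \<le> lam * Yr^2 * real T / ?mpe"
    using ths(3) lam YYr assms(4)
    by (intro divide_right_mono mult_right_mono mult_left_mono power_mono) auto
  then have ridge: "regret_ridge x y lam T \<le> 4 * Yr^2 * ?d * ?ln + lam * Yr^2 * real T / ?mpe"
    using R1 INF reg_term unfolding regret_ridge_def by (simp add: mult.assoc)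
  have "L_forward x y lam T \<le> ?m T - ?m 0 + (\<Sum>t=1..T. (y t)^2 * hq x lam t)"
    unfolding L_forward_def by (rule telescope) (rule forward_step[OF lam])
  also have "(\<Sum>t=1..T. (y t)^2 * hq x lam t) \<le> (\<Sum>t=1..T. Y^2 * hq x lam t)"
  proof (intro sum_mono mult_right_mono)
    fix t assume "t \<in> {1..T}"
    then have "\<bar>y t\<bar> \<le> Y" by (rule assms(6))
    then show "(y t)^2 \<le> Y^2" by (metis abs_ge_zero power2_abs power_mono)
  qed (use Hnn in auto)
  also have "\<dots> = Y^2 * ?H" by (simp add: sum_distrib_left)
  also have "\<dots> \<le> Y^2 * (?d * ?ln)" using H by (intro mult_left_mono) auto
  finally have F1: "L_forward x y lam T \<le> Lfix x y T ths + lam * (ths \<bullet> ths) + Y^2 * (?d * ?ln)"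
    using mT m0 by linarith
  have forward: "regret_forward x y lam T \<le> 1 * Y^2 * ?d * ?ln + lam * Y^2 * real T / ?mpe"
    using F1 INF reg_term unfolding regret_forward_def by (simp add: mult.assoc)
  show ?thesis using ridge forward unfolding Yr_def Let_def by simp
qed

end
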